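(* Let $P$ be a continuous $L$-ordered set. Then $\Sigma_LP=(P,\sigma_L(P))$ is a locally super-compact $L$-topological space. Consequently, if $P$ is moreover an $L$-dcpo, then $\Sigma_LP$ is a locally super-compact $L$-sober space.
   Context: $L$ is a frame with implication $\to$. $L$-subsets of $X$: maps $X\to L$; nonempty: $\bigvee_xA(x)=1$; ${\rm sub}_X(A,B)=\bigwedge_xA(x)\to B(x)$. $L$-topology: $\mathcal O(X)\subseteq L^X$ closed under finite meets, arbitrary joins, containing constants; interior $A^\circ=\bigvee\{B\text{ open}:B\le A\}$. Super-compact: nonempty $A$ with ${\rm sub}_X(A,\bigvee_iV_i)=\bigvee_i{\rm sub}_X(A,V_i)$ for every family of open $V_i$; ${\rm SC}(X)$ is their set. Locally super-compact: every open $A$ equals $\bigvee_{B\in{\rm SC}(X)}{\rm sub}_X(B,A)\wedge B^\circ$. A point of $\mathcal O(X)$: $p:\mathcal O(X)\to L$ preserving binary meets and arbitrary joins with $p(\lambda_X)=\lambda$; $[x](A)=A(x)$; $L$-sober: $x\mapsto[x]$ bijective onto the points. $L$-order on $P$: $e$ with $e(x,x)=1$, $e(x,y)\wedge e(y,z)\le e(x,z)$, $e(x,y)\wedge e(y,x)=1\Rightarrow x=y$. ${\downarrow}y(x)=e(x,y)$. $\sqcup A=x$ iff $e(x,y)={\rm sub}_P(A,{\downarrow}y)$ for all $y$. Directed: nonempty and $D(x)\wedge D(y)\le\bigvee_zD(z)\wedge e(x,z)\wedge e(y,z)$; ideal: directed lower set. $L$-dcpo: all directed $L$-subsets have suprema.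 ${\Downarrow}x(y)=\bigwedge\{e(x,\sqcup I)\to I(y):I\text{ ideal with a supremum}\}$; $P$ continuous if each ${\Downarrow}x$ is directed with supremum $x$. $\sigma_L(P)$: upper sets $A$ with $A(\sqcup D)=\bigvee_xA(x)\wedge D(x)$ for all directed $D$ having a supremum. *)

theory Defs
  imports Main
begin

class frame = complete_lattice +
  assumes inf_Sup_distrib_frame: "inf a (Sup S) = (SUP s\<in>S. inf a s)"

definition himp :: "'l::frame \<Rightarrow> 'l \<Rightarrow> 'l" where
  "himp a b = Sup {c. inf c a \<le> b}"

definition Lnonempty :: "('a \<Rightarrow> 'l::frame) \<Rightarrow> bool" where
  "Lnonempty A \<longleftrightarrow> (SUP x. A x) = top"

definition Lsub :: "('a \<Rightarrow> 'l::frame) \<Rightarrow> ('a \<Rightarrow> 'l) \<Rightarrow> 'l" where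
  "Lsub A B = (INF x. himp (A x) (B x))"

definition is_Ltopology :: "('a \<Rightarrow> 'l::frame) set \<Rightarrow> bool" where
  "is_Ltopology T \<longleftrightarrow>
     (\<forall>A\<in>T. \<forall>B\<in>T. inf A B \<in> T) \<and>
     (\<forall>S. S \<subseteq> T \<longrightarrow> Sup S \<in> T) \<and>
     (\<forall>c. (\<lambda>_. c) \<in> T)"

definition Linterior :: "('a \<Rightarrow> 'l::frame) set \<Rightarrow> ('a \<Rightarrow> 'l) \<Rightarrow> ('a \<Rightarrow> 'l)" where
  "Linterior T A = Sup {B\<in>T. B \<le> A}"

definition super_compact :: "('a \<Rightarrow> 'l::frame) set \<Rightarrow> ('a \<Rightarrow> 'l) \<Rightarrow> bool" where
  "super_compact T A \<longleftrightarrow> Lnonempty A \<and>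
     (\<forall>\<V>. \<V> \<subseteq> T \<longrightarrow> Lsub A (Sup \<V>) = (SUP V\<in>\<V>. Lsub A V))"

definition SC :: "('a \<Rightarrow> 'l::frame) set \<Rightarrow> ('a \<Rightarrow> 'l) set" where
  "SC T = {A. super_compact T A}"

definition locally_super_compact :: "('a \<Rightarrow> 'l::frame) set \<Rightarrow> bool" where
  "locally_super_compact T \<longleftrightarrow>
     (\<forall>A\<in>T. A = (SUP B\<in>SC T. (\<lambda>x. inf (Lsub B A) (Linterior T B x))))"

text \<open>A point of the frame of open sets, given as a function that is only
  constrained on the open sets.\<close>
definition is_point :: "('a \<Rightarrow> 'l::frame) set \<Rightarrow> (('a \<Rightarrow> 'l) \<Rightarrow> 'l) \<Rightarrow> bool" where
  "is_point T p \<longleftrightarrow>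
     (\<forall>A\<in>T. \<forall>B\<in>T. p (inf A B) = inf (p A) (p B)) \<and>
     (\<forall>S. S \<subseteq> T \<longrightarrow> p (Sup S) = (SUP A\<in>S. p A)) \<and>
     (\<forall>c. p (\<lambda>_. c) = c)"

text \<open>L-sober: \<open>x \<mapsto> [x]\<close> is a bijection onto the points (points being
  identified when they agree on all open sets).\<close>
definition L_sober :: "('a \<Rightarrow> 'l::frame) set \<Rightarrow> bool" where
  "L_sober T \<longleftrightarrow>
     (\<forall>x. is_point T (\<lambda>A. A x)) \<and>
     (\<forall>x y. (\<forall>A\<in>T. A x = A y) \<longrightarrow> x = y) \<and>
     (\<forall>p. is_point T p \<longrightarrow> (\<exists>x. \<forall>A\<in>T. p A = A x))"

definition is_Lorder :: "('a \<Rightarrow> 'a \<Rightarrow> 'l::frame) \<Rightarrow> bool" where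
  "is_Lorder e \<longleftrightarrow>
     (\<forall>x. e x x = top) \<and>
     (\<forall>x y z. inf (e x y) (e y z) \<le> e x z) \<and>
     (\<forall>x y. inf (e x y) (e y x) = top \<longrightarrow> x = y)"

definition Ldown :: "('a \<Rightarrow> 'a \<Rightarrow> 'l::frame) \<Rightarrow> 'a \<Rightarrow> ('a \<Rightarrow> 'l)" where
  "Ldown e y = (\<lambda>x. e x y)"

definition is_Lsup :: "('a \<Rightarrow> 'a \<Rightarrow> 'l::frame) \<Rightarrow> ('a \<Rightarrow> 'l) \<Rightarrow> 'a \<Rightarrow> bool" where
  "is_Lsup e A x \<longleftrightarrow> (\<forall>y. e x y = Lsub A (Ldown e y))"

definition Ldirected :: "('a \<Rightarrow> 'a \<Rightarrow> 'l::frame) \<Rightarrow> ('a \<Rightarrow> 'l) \<Rightarrow> bool" where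
  "Ldirected e D \<longleftrightarrow> Lnonempty D \<and>
     (\<forall>x y. inf (D x) (D y) \<le> (SUP z. inf (D z) (inf (e x z) (e y z))))"

definition Llower :: "('a \<Rightarrow> 'a \<Rightarrow> 'l::frame) \<Rightarrow> ('a \<Rightarrow> 'l) \<Rightarrow> bool" where
  "Llower e A \<longleftrightarrow> (\<forall>x y. inf (A y) (e x y) \<le> A x)"

definition Lupper :: "('a \<Rightarrow> 'a \<Rightarrow> 'l::frame) \<Rightarrow> ('a \<Rightarrow> 'l) \<Rightarrow> bool" where
  "Lupper e A \<longleftrightarrow> (\<forall>x y. inf (A x) (e x y) \<le> A y)"

definition Lideal :: "('a \<Rightarrow> 'a \<Rightarrow> 'l::frame) \<Rightarrow> ('a \<Rightarrow> 'l) \<Rightarrow> bool" where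
  "Lideal e I \<longleftrightarrow> Ldirected e I \<and> Llower e I"

definition L_dcpo :: "('a \<Rightarrow> 'a \<Rightarrow> 'l::frame) \<Rightarrow> bool" where
  "L_dcpo e \<longleftrightarrow> (\<forall>D. Ldirected e D \<longrightarrow> (\<exists>x. is_Lsup e D x))"

text \<open>\<open>\<Down>x(y) = \<Sqinter>{e(x, \<squnion>I) \<rightarrow> I(y) : I ideal with a supremum}\<close>; the pair
  \<open>(I, s)\<close> ranges over ideals together with their (unique) supremum.\<close>
definition Lwaybelow :: "('a \<Rightarrow> 'a \<Rightarrow> 'l::frame) \<Rightarrow> 'a \<Rightarrow> ('a \<Rightarrow> 'l)" where
  "Lwaybelow e x = (\<lambda>y. INF Is\<in>{(I, s). Lideal e I \<and> is_Lsup e I s}.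
                          himp (e x (snd Is)) (fst Is y))"

definition L_continuous :: "('a \<Rightarrow> 'a \<Rightarrow> 'l::frame) \<Rightarrow> bool" where
  "L_continuous e \<longleftrightarrow> (\<forall>x. Ldirected e (Lwaybelow e x) \<and> is_Lsup e (Lwaybelow e x) x)"

definition sigmaL :: "('a \<Rightarrow> 'a \<Rightarrow> 'l::frame) \<Rightarrow> ('a \<Rightarrow> 'l) set" where
  "sigmaL e = {A. Lupper e A \<and>
     (\<forall>D s. Ldirected e D \<longrightarrow> is_Lsup e D s \<longrightarrow> A s = (SUP x. inf (A x) (D x)))}"

end

theory Submission
  imports Defs
begin

lemma inf_SUP_fr: "inf (a::'l::frame) (SUP i\<in>I. f i) = (SUP i\<in>I. inf a (f i))"
  using inf_Sup_distrib_frame[of a "f ` I"] by (simp add: image_comp)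

lemma SUP_inf_fr: "inf (SUP i\<in>I. f i) (a::'l::frame) = (SUP i\<in>I. inf (f i) a)"
  using inf_SUP_fr[where a=a and I=I and f=f] by (simp add: inf_commute)

lemma inf_SUP_le: "(\<And>i. i \<in> I \<Longrightarrow> inf a (f i) \<le> b) \<Longrightarrow> inf (a::'l::frame) (SUP i\<in>I. f i) \<le> b"
  by (simp add: inf_SUP_fr SUP_least)

lemma SUP_inf_le: "(\<And>i. i \<in> I \<Longrightarrow> inf (f i) a \<le> b) \<Longrightarrow> inf (SUP i\<in>I. f i) (a::'l::frame) \<le> b"
  by (simp add: SUP_inf_fr SUP_least)

lemma himp_le_iff: "(c::'l::frame) \<le> himp a b \<longleftrightarrow> inf c a \<le> b"
proof
  assume "c \<le> himp a b"
  hence "inf c a \<le> inf (himp a b) a" by (rule inf_mono) simp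
  also have "\<dots> = inf a (Sup {c. inf c a \<le> b})" by (simp add: himp_def inf_commute)
  also have "\<dots> \<le> b" unfolding inf_Sup_distrib_frame by (auto intro!: SUP_least simp: inf_commute)
  finally show "inf c a \<le> b" .
next
  assume "inf c a \<le> b" thus "c \<le> himp a b" unfolding himp_def by (rule Sup_upper[OF CollectI])
qed

lemma himp_inf: "inf (himp a b) (a::'l::frame) \<le> b"
  using himp_le_iff by blast

lemma Lsub_ge: "c \<le> Lsub A B \<longleftrightarrow> (\<forall>x. inf c (A x) \<le> B x)"
  by (simp add: Lsub_def le_INF_iff himp_le_iff)

lemma Lsub_inf: "inf (Lsub A B) (A x) \<le> B x"
  using Lsub_ge[of "Lsub A B" A B] by simp

locale Lcont =
  fixes e :: "'a \<Rightarrow> 'a \<Rightarrow> 'l::frame"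
  assumes ord: "is_Lorder e" and cont: "L_continuous e"
begin

abbreviation W where "W \<equiv> Lwaybelow e"
abbreviation T where "T \<equiv> sigmaL e"

lemma refl: "e x x = top" using ord by (simp add: is_Lorder_def)
lemma trans: "inf (e x y) (e y z) \<le> e x z" using ord by (simp add: is_Lorder_def)
lemma e_antisym: "inf (e x y) (e y x) = top \<Longrightarrow> x = y" using ord by (simp add: is_Lorder_def)

lemma sup_le: assumes "is_Lsup e D s" shows "D x \<le> e x s"
proof -
  have "top = Lsub D (Ldown e s)" using assms refl by (metis is_Lsup_def)
  hence "inf top (D x) \<le> e x s" using Lsub_ge[of top D "Ldown e s"] by (simp add: Ldown_def)
  thus ?thesis by simp
qed

lemma down_ideal: "Lideal e (Ldown e y)"
  unfolding Lideal_def Ldirected_def Llower_def Lnonempty_def Ldown_def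
proof (intro conjI allI)
  show "(SUP x. e x y) = top" by (metis refl UNIV_I SUP_upper top_le)
  fix a b show "inf (e a y) (e b y) \<le> (SUP z. inf (e z y) (inf (e a z) (e b z)))"
    by (rule SUP_upper2[of y]) (auto simp: refl)
next
  fix a b show "inf (e b y) (e a b) \<le> e a y" using trans by (simp add: inf_commute)
qed

lemma down_sup: "is_Lsup e (Ldown e y) y"
  unfolding is_Lsup_def
proof
  fix w
  show "e y w = Lsub (Ldown e y) (Ldown e w)"
  proof (rule order.antisym)
    show "e y w \<le> Lsub (Ldown e y) (Ldown e w)"
      unfolding Lsub_ge Ldown_def using trans by (simp add: inf_commute)
    have "inf (Lsub (Ldown e y) (Ldown e w)) (Ldown e y y) \<le> Ldown e w y" by (rule Lsub_inf)
    thus "Lsub (Ldown e y) (Ldown e w) \<le> e y w" by (simp add: Ldown_def refl)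
  qed
qed

lemma W_himp: "Lideal e I \<Longrightarrow> is_Lsup e I s \<Longrightarrow> W x w \<le> himp (e x s) (I w)"
  unfolding Lwaybelow_def by (rule INF_lower2[of "(I, s)"]) simp_all

lemma W_himp': "Lideal e I \<Longrightarrow> is_Lsup e I s \<Longrightarrow> inf (W x w) (e x s) \<le> I w"
  using W_himp himp_le_iff by blast

lemma le_W: "(\<And>I s. Lideal e I \<Longrightarrow> is_Lsup e I s \<Longrightarrow> inf c (e x s) \<le> I w) \<Longrightarrow> c \<le> W x w"
  unfolding Lwaybelow_def le_INF_iff himp_le_iff by clarsimp

lemma W_le: "W y z \<le> e z y"
proof -
  have "W y z \<le> himp (e y y) (Ldown e y z)" by (rule W_himp[OF down_ideal down_sup])
  also have "\<dots> \<le> e z y" using himp_inf[of top "e z y"] by (simp add: refl Ldown_def)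
  finally show ?thesis .
qed

lemma W_lower: "inf (W x w) (e v w) \<le> W x v"
proof (rule le_W)
  fix I s assume I: "Lideal e I" "is_Lsup e I s"
  have "inf (inf (W x w) (e v w)) (e x s) = inf (inf (W x w) (e x s)) (e v w)"
    by (metis inf.assoc inf.commute)
  also have "\<dots> \<le> inf (I w) (e v w)" by (rule inf_mono[OF W_himp'[OF I] order_refl])
  also have "\<dots> \<le> I v" using I unfolding Lideal_def Llower_def by blast
  finally show "inf (inf (W x w) (e v w)) (e x s) \<le> I v" .
qed

lemma W_upper: "inf (W a z) (e a b) \<le> W b z"
proof (rule le_W)
  fix I s assume I: "Lideal e I" "is_Lsup e I s"
  have "inf (inf (W a z) (e a b)) (e b s) \<le> inf (W a z) (e a s)"
    unfolding inf_assoc by (rule inf_mono[OF order_refl trans])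
  also have "\<dots> \<le> I z" by (rule W_himp'[OF I])
  finally show "inf (inf (W a z) (e a b)) (e b s) \<le> I z" .
qed

lemma W_dir: "Ldirected e (W x)"
  using cont unfolding L_continuous_def by simp

lemma W_sup: "is_Lsup e (W x) x"
  using cont unfolding L_continuous_def by simp

lemma W_top: "(SUP w. W x w) = top"
  using W_dir[of x] unfolding Ldirected_def Lnonempty_def by simp

lemma W_dir2: "inf (W u a) (W u b) \<le> (SUP v. inf (W u v) (inf (e a v) (e b v)))"
  using W_dir[of u] unfolding Ldirected_def by simp

lemma key:
  assumes D: "Ldirected e D" and s: "is_Lsup e D s"
  shows "W s z \<le> (SUP x. inf (D x) (W x z))"
proof -
  define I where "I = (\<lambda>w. SUP x. inf (D x) (W x w))"
  have I_app: "I w = (SUP x. inf (D x) (W x w))" for w unfolding I_def by simp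
  have Iupper: "inf (D x) (W x w) \<le> I w" for x w
    unfolding I_def by (rule SUP_upper) simp
  have Dtop: "(SUP x. D x) = top" using D unfolding Ldirected_def Lnonempty_def by simp
  have Ddir: "inf (D x) (D y) \<le> (SUP z. inf (D z) (inf (e x z) (e y z)))" for x y
    using D unfolding Ldirected_def by simp
  have Inon: "Lnonempty I"
  proof -
    have "(SUP w. I w) = (SUP x. SUP w. inf (D x) (W x w))" unfolding I_def by (rule SUP_commute)
    also have "\<dots> = (SUP x. inf (D x) (SUP w. W x w))" by (simp add: inf_SUP_fr)
    also have "\<dots> = top" by (simp add: W_top Dtop)
    finally show ?thesis unfolding Lnonempty_def .
  qed
  have Ilow: "Llower e I"
    unfolding Llower_def
  proof (intro allI)
    fix x y
    show "inf (I y) (e x y) \<le> I x"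
      unfolding I_app[of y]
    proof (rule SUP_inf_le)
      fix u
      have "inf (inf (D u) (W u y)) (e x y) = inf (D u) (inf (W u y) (e x y))" by (rule inf_assoc)
      also have "\<dots> \<le> inf (D u) (W u x)" by (rule inf_mono[OF order_refl W_lower])
      also have "\<dots> \<le> I x" by (rule Iupper)
      finally show "inf (inf (D u) (W u y)) (e x y) \<le> I x" .
    qed
  qed
  have Idir: "inf (I a) (I b) \<le> (SUP v. inf (I v) (inf (e a v) (e b v)))" for a b
  proof -
    let ?R = "(SUP v. inf (I v) (inf (e a v) (e b v)))"
    show ?thesis
      unfolding I_app[of a] I_app[of b]
    proof (rule SUP_inf_le, rule inf_SUP_le)
      fix x y
      have "inf (inf (D x) (W x a)) (inf (D y) (W y b))
          = inf (inf (W x a) (W y b)) (inf (D x) (D y))" by (simp add: ac_simps)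
      also have "\<dots> \<le> inf (inf (W x a) (W y b)) (SUP z. inf (D z) (inf (e x z) (e y z)))"
        by (rule inf_mono[OF order_refl Ddir])
      also have "\<dots> \<le> ?R"
      proof (rule inf_SUP_le)
        fix u
        have "inf (W x a) (e x u) \<le> W u a" by (rule W_upper)
        moreover have "inf (W y b) (e y u) \<le> W u b" by (rule W_upper)
        ultimately have "inf (inf (W x a) (W y b)) (inf (D u) (inf (e x u) (e y u)))
            \<le> inf (D u) (inf (W u a) (W u b))"
          by (smt (verit) inf.bounded_iff inf.coboundedI1 inf.coboundedI2 inf.cobounded1 inf.cobounded2 order_trans)
        also have "\<dots> \<le> inf (D u) (SUP v. inf (W u v) (inf (e a v) (e b v)))"
          by (rule inf_mono[OF order_refl W_dir2])
        also have "\<dots> \<le> ?R"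
        proof (rule inf_SUP_le)
          fix v
          have "inf (D u) (inf (W u v) (inf (e a v) (e b v))) \<le> inf (I v) (inf (e a v) (e b v))"
            using Iupper[of u v] by (metis inf.assoc inf_mono order_refl)
          also have "\<dots> \<le> ?R" by (rule SUP_upper) simp
          finally show "inf (D u) (inf (W u v) (inf (e a v) (e b v))) \<le> ?R" .
        qed
        finally show "inf (inf (W x a) (W y b)) (inf (D u) (inf (e x u) (e y u))) \<le> ?R" .
      qed
      finally show "inf (inf (D x) (W x a)) (inf (D y) (W y b)) \<le> ?R" .
    qed
  qed
  have Isup: "is_Lsup e I s"
    unfolding is_Lsup_def
  proof
    fix y
    show "e s y = Lsub I (Ldown e y)"
    proof (rule order.antisym)
      show "e s y \<le> Lsub I (Ldown e y)"
        unfolding Lsub_ge Ldown_def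
      proof
        fix w
        show "inf (e s y) (I w) \<le> e w y"
          unfolding I_app[of w]
        proof (rule inf_SUP_le)
          fix x
          have "D x \<le> e x s" by (rule sup_le[OF s])
          moreover have "W x w \<le> e w x" by (rule W_le)
          ultimately have "inf (e s y) (inf (D x) (W x w)) \<le> inf (inf (e w x) (e x s)) (e s y)"
            by (simp add: inf.coboundedI1 inf.coboundedI2 le_infI1 le_infI2)
          also have "\<dots> \<le> inf (e w s) (e s y)" by (rule inf_mono[OF trans order_refl])
          also have "\<dots> \<le> e w y" by (rule trans)
          finally show "inf (e s y) (inf (D x) (W x w)) \<le> e w y" .
        qed
      qed
      show "Lsub I (Ldown e y) \<le> e s y"
        unfolding s[unfolded is_Lsup_def, rule_format, of y] Lsub_ge
      proof
        fix x
        have "inf (Lsub I (Ldown e y)) (D x) \<le> Lsub (W x) (Ldown e y)"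
          unfolding Lsub_ge
        proof
          fix w
          have "inf (inf (Lsub I (Ldown e y)) (D x)) (W x w) \<le> inf (Lsub I (Ldown e y)) (I w)"
            using Iupper[of x w] by (metis inf.assoc inf_mono order_refl)
          also have "\<dots> \<le> Ldown e y w" by (rule Lsub_inf)
          finally show "inf (inf (Lsub I (Ldown e y)) (D x)) (W x w) \<le> Ldown e y w" .
        qed
        also have "Lsub (W x) (Ldown e y) = Ldown e y x"
          using W_sup[of x] unfolding is_Lsup_def by (simp add: Ldown_def)
        finally show "inf (Lsub I (Ldown e y)) (D x) \<le> Ldown e y x" .
      qed
    qed
  qed
  have "Lideal e I" using Inon Ilow Idir unfolding Lideal_def Ldirected_def by blast
  hence "inf (W s z) (e s s) \<le> I z" using W_himp' Isup by blast
  thus ?thesis by (simp add: refl I_def)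
qed

lemma Up_open: "(\<lambda>y. W y z) \<in> T"
  unfolding sigmaL_def Lupper_def
proof (intro CollectI conjI allI impI)
  fix x y show "inf (W x z) (e x y) \<le> W y z" by (rule W_upper)
next
  fix D s assume D: "Ldirected e D" and s: "is_Lsup e D s"
  show "W s z = (SUP x. inf (W x z) (D x))"
  proof (rule order.antisym)
    show "W s z \<le> (SUP x. inf (W x z) (D x))" using key[OF D s, of z] by (simp add: inf_commute)
    show "(SUP x. inf (W x z) (D x)) \<le> W s z"
    proof (rule SUP_least)
      fix x
      have "inf (W x z) (D x) \<le> inf (W x z) (e x s)" by (rule inf_mono[OF order_refl sup_le[OF s]])
      also have "\<dots> \<le> W s z" by (rule W_upper)
      finally show "inf (W x z) (D x) \<le> W s z" .
    qed
  qed
qed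

lemma open_upper: "A \<in> T \<Longrightarrow> inf (A x) (e x y) \<le> A y"
  unfolding sigmaL_def Lupper_def by blast

lemma open_scott: "A \<in> T \<Longrightarrow> Ldirected e D \<Longrightarrow> is_Lsup e D s \<Longrightarrow> A s = (SUP x. inf (A x) (D x))"
  unfolding sigmaL_def by blast

lemma open_rep: "A \<in> T \<Longrightarrow> A y = (SUP x. inf (A x) (W y x))"
  using open_scott W_dir W_sup by blast

lemma open_ge: "A \<in> T \<Longrightarrow> is_Lsup e D s \<Longrightarrow> inf (A x) (D x) \<le> A s"
  using open_upper[of A x s] sup_le[of D s x] by (meson inf_mono order_refl order_trans)

lemma Lsub_up: assumes "A \<in> T" shows "Lsub (e x) A = A x"
proof (rule order.antisym)
  show "Lsub (e x) A \<le> A x" using Lsub_inf[of "e x" A x] by (simp add: refl)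
  show "A x \<le> Lsub (e x) A" unfolding Lsub_ge using open_upper[OF assms] by blast
qed

lemma T_inf: assumes A: "A \<in> T" and B: "B \<in> T" shows "inf A B \<in> T"
  unfolding sigmaL_def Lupper_def
proof (intro CollectI conjI allI impI)
  fix x y
  have "inf (inf (A x) (B x)) (e x y) \<le> inf (inf (A x) (e x y)) (inf (B x) (e x y))"
    by (simp add: inf.coboundedI1 inf.coboundedI2 le_infI1 le_infI2)
  also have "\<dots> \<le> inf (A y) (B y)" by (rule inf_mono[OF open_upper[OF A] open_upper[OF B]])
  finally show "inf (inf A B x) (e x y) \<le> inf A B y" by simp
next
  fix D s assume D: "Ldirected e D" and s: "is_Lsup e D s"
  let ?R = "(SUP x. inf (inf A B x) (D x))"
  have Ddir: "inf (D x) (D y) \<le> (SUP z. inf (D z) (inf (e x z) (e y z)))" for x y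
    using D unfolding Ldirected_def by simp
  show "inf A B s = ?R"
  proof (rule order.antisym)
    have "inf (A s) (B s) \<le> ?R"
      unfolding open_scott[OF A D s] open_scott[OF B D s]
    proof (rule SUP_inf_le, rule inf_SUP_le)
      fix x y
      have "inf (inf (A x) (D x)) (inf (B y) (D y)) = inf (inf (A x) (B y)) (inf (D x) (D y))"
        by (simp add: ac_simps)
      also have "\<dots> \<le> inf (inf (A x) (B y)) (SUP z. inf (D z) (inf (e x z) (e y z)))"
        by (rule inf_mono[OF order_refl Ddir])
      also have "\<dots> \<le> ?R"
      proof (rule inf_SUP_le)
        fix z
        have "inf (A x) (e x z) \<le> A z" by (rule open_upper[OF A])
        moreover have "inf (B y) (e y z) \<le> B z" by (rule open_upper[OF B])
        ultimately have "inf (inf (A x) (B y)) (inf (D z) (inf (e x z) (e y z))) \<le> inf (inf A B z) (D z)"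
          by (simp, smt (verit) inf.bounded_iff inf.coboundedI1 inf.coboundedI2 inf.cobounded1 inf.cobounded2 order_trans)
        also have "\<dots> \<le> ?R" by (rule SUP_upper) simp
        finally show "inf (inf (A x) (B y)) (inf (D z) (inf (e x z) (e y z))) \<le> ?R" .
      qed
      finally show "inf (inf (A x) (D x)) (inf (B y) (D y)) \<le> ?R" .
    qed
    thus "inf A B s \<le> ?R" by simp
    show "?R \<le> inf A B s"
    proof (rule SUP_least)
      fix x
      have "inf (inf A B x) (D x) \<le> inf (inf (A x) (D x)) (inf (B x) (D x))"
        by (simp add: inf.coboundedI1 inf.coboundedI2 le_infI1 le_infI2)
      also have "\<dots> \<le> inf (A s) (B s)" by (rule inf_mono[OF open_ge[OF A s] open_ge[OF B s]])
      finally show "inf (inf A B x) (D x) \<le> inf A B s" by simp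
    qed
  qed
qed

lemma T_Sup: assumes S: "S \<subseteq> T" shows "Sup S \<in> T"
  unfolding sigmaL_def Lupper_def
proof (intro CollectI conjI allI impI)
  fix x y
  show "inf (Sup S x) (e x y) \<le> Sup S y"
    unfolding Sup_apply
  proof (rule SUP_inf_le)
    fix A assume "A \<in> S"
    hence "inf (A x) (e x y) \<le> A y" using S open_upper by blast
    thus "inf (A x) (e x y) \<le> (SUP A\<in>S. A y)" using \<open>A \<in> S\<close> by (blast intro: SUP_upper2)
  qed
next
  fix D s assume D: "Ldirected e D" and s: "is_Lsup e D s"
  show "Sup S s = (SUP x. inf (Sup S x) (D x))"
    unfolding Sup_apply
  proof (rule order.antisym)
    show "(SUP A\<in>S. A s) \<le> (SUP x. inf (SUP A\<in>S. A x) (D x))"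
    proof (rule SUP_least)
      fix A assume "A \<in> S"
      hence "A s = (SUP x. inf (A x) (D x))" using S open_scott D s by blast
      also have "\<dots> \<le> (SUP x. inf (SUP A\<in>S. A x) (D x))"
        by (rule SUP_mono') (rule inf_mono[OF SUP_upper[OF \<open>A \<in> S\<close>] order_refl])
      finally show "A s \<le> \<dots>" .
    qed
    show "(SUP x. inf (SUP A\<in>S. A x) (D x)) \<le> (SUP A\<in>S. A s)"
    proof (rule SUP_least, rule SUP_inf_le)
      fix x A assume "A \<in> S"
      hence "inf (A x) (D x) \<le> A s" using S open_ge s by blast
      thus "inf (A x) (D x) \<le> (SUP A\<in>S. A s)" using \<open>A \<in> S\<close> by (blast intro: SUP_upper2)
    qed
  qed
qed

lemma T_SUP: "(\<And>i. F i \<in> T) \<Longrightarrow> (SUP i. F i) \<in> T"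
  by (rule T_Sup) blast

lemma T_const: "(\<lambda>_. c) \<in> T"
  unfolding sigmaL_def Lupper_def
proof (intro CollectI conjI allI impI)
  fix x y :: 'a show "inf c (e x y) \<le> c" by simp
next
  fix D s assume D: "Ldirected e D" and s: "is_Lsup e D s"
  have "(SUP x. inf c (D x)) = inf c (SUP x. D x)" by (simp add: inf_SUP_fr)
  also have "\<dots> = c" using D unfolding Ldirected_def Lnonempty_def by simp
  finally show "c = (SUP x. inf c (D x))" by simp
qed

lemma topology: "is_Ltopology T"
  unfolding is_Ltopology_def using T_inf T_Sup T_const by blast

lemma Linterior_le: "Linterior T B y \<le> B y"
  unfolding Linterior_def Sup_apply by (rule SUP_least) (auto dest: le_funD)

lemma Linterior_ge: "C \<in> T \<Longrightarrow> C \<le> B \<Longrightarrow> C y \<le> Linterior T B y"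
  unfolding Linterior_def by (rule le_funD, rule Sup_upper) blast

lemma up_SC: "e x \<in> SC T"
  unfolding SC_def super_compact_def
proof (intro CollectI conjI allI impI)
  show "Lnonempty (e x)" unfolding Lnonempty_def
    by (rule top_le, rule SUP_upper2[of x]) (simp_all add: refl)
next
  fix V assume V: "V \<subseteq> T"
  have "Lsub (e x) (Sup V) = Sup V x" by (rule Lsub_up[OF T_Sup[OF V]])
  also have "\<dots> = (SUP A\<in>V. A x)" by (simp add: Sup_apply)
  also have "\<dots> = (SUP A\<in>V. Lsub (e x) A)"
    by (rule SUP_cong) (use V Lsub_up in auto)
  finally show "Lsub (e x) (Sup V) = (SUP A\<in>V. Lsub (e x) A)" .
qed

lemma lsc: "locally_super_compact T"
  unfolding locally_super_compact_def
proof (intro ballI ext)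
  fix A y assume A: "A \<in> T"
  show "A y = (SUP B\<in>SC T. (\<lambda>x. inf (Lsub B A) (Linterior T B x))) y"
    unfolding SUP_apply
  proof (rule order.antisym)
    show "A y \<le> (SUP B\<in>SC T. inf (Lsub B A) (Linterior T B y))"
      unfolding open_rep[OF A, of y]
    proof (rule SUP_least)
      fix x
      have "W y x \<le> Linterior T (e x) y"
        by (rule Linterior_ge[OF Up_open]) (rule le_funI, rule W_le)
      hence "inf (A x) (W y x) \<le> inf (Lsub (e x) A) (Linterior T (e x) y)"
        by (simp add: Lsub_up[OF A] inf.coboundedI2)
      thus "inf (A x) (W y x) \<le> (SUP B\<in>SC T. inf (Lsub B A) (Linterior T B y))"
        by (rule SUP_upper2[OF up_SC])
    qed
    show "(SUP B\<in>SC T. inf (Lsub B A) (Linterior T B y)) \<le> A y"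
    proof (rule SUP_least)
      fix B
      have "inf (Lsub B A) (Linterior T B y) \<le> inf (Lsub B A) (B y)"
        by (rule inf_mono[OF order_refl Linterior_le])
      also have "\<dots> \<le> A y" by (rule Lsub_inf)
      finally show "inf (Lsub B A) (Linterior T B y) \<le> A y" .
    qed
  qed
qed

lemma point_x: "is_point T (\<lambda>A. A x)"
  unfolding is_point_def by (simp add: Sup_apply)

lemma T0: assumes "\<forall>A\<in>T. A x = A y" shows "x = y"
proof -
  have "W x z = W y z" for z using bspec[OF assms Up_open[of z]] by simp
  hence Wxy: "W x = W y" by blast
  have exy: "e x w = e y w" for w
    using W_sup[of x] W_sup[of y] unfolding is_Lsup_def Wxy by simp
  have "inf (e x y) (e y x) = top" using exy[of y] exy[of x] by (simp add: refl)
  thus ?thesis by (rule e_antisym)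
qed

lemma point_ex:
  assumes dcpo: "L_dcpo e" and p: "is_point T p"
  shows "\<exists>x. \<forall>A\<in>T. p A = A x"
proof -
  have pinf: "A \<in> T \<Longrightarrow> B \<in> T \<Longrightarrow> p (inf A B) = inf (p A) (p B)" for A B
    using p unfolding is_point_def by blast
  have pSup: "S \<subseteq> T \<Longrightarrow> p (Sup S) = (SUP A\<in>S. p A)" for S
    using p unfolding is_point_def by blast
  have pc: "p (\<lambda>_. c) = c" for c using p unfolding is_point_def by blast
  have pmono: "A \<in> T \<Longrightarrow> B \<in> T \<Longrightarrow> A \<le> B \<Longrightarrow> p A \<le> p B" for A B
    by (metis inf.absorb1 inf.cobounded2 pinf)
  have pconst: "A \<in> T \<Longrightarrow> p (inf A (\<lambda>_. c)) = inf (p A) c" for A c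
    using pinf[OF _ T_const] pc by simp
  have pSUP: "(\<And>i. F i \<in> T) \<Longrightarrow> p (SUP i. F i) = (SUP i. p (F i))" for F :: "'b \<Rightarrow> 'a \<Rightarrow> 'l"
    using pSup[of "range F"] by (auto simp: image_comp)
  define D where "D = (\<lambda>z. p (\<lambda>y. W y z))"
  have Dnon: "Lnonempty D"
  proof -
    have "(SUP z. (\<lambda>y. W y z)) = (\<lambda>_. top)" by (rule ext) (simp add: SUP_apply Sup_apply image_comp comp_def W_top)
    hence "(SUP z. D z) = p (\<lambda>_. top)" unfolding D_def using pSUP[of "\<lambda>z y. W y z", OF Up_open] by simp
    thus ?thesis unfolding Lnonempty_def using pc by simp
  qed
  have Ddir: "inf (D a) (D b) \<le> (SUP v. inf (D v) (inf (e a v) (e b v)))" for a b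
  proof -
    have opn: "(\<lambda>y. W y v) \<in> T" for v by (rule Up_open)
    have opn2: "inf (\<lambda>y. W y v) (\<lambda>_. inf (e a v) (e b v)) \<in> T" for v by (rule T_inf[OF opn T_const])
    have "inf (D a) (D b) = p (inf (\<lambda>y. W y a) (\<lambda>y. W y b))" unfolding D_def by (simp add: pinf[OF opn opn])
    also have "\<dots> \<le> p (SUP v. inf (\<lambda>y. W y v) (\<lambda>_. inf (e a v) (e b v)))"
    proof (rule pmono[OF T_inf[OF opn opn] T_SUP[OF opn2]])
      show "inf (\<lambda>y. W y a) (\<lambda>y. W y b) \<le> (SUP v. inf (\<lambda>y. W y v) (\<lambda>_. inf (e a v) (e b v)))"
        by (rule le_funI) (simp add: SUP_apply Sup_apply image_comp comp_def W_dir2)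
    qed
    also have "\<dots> = (SUP v. inf (D v) (inf (e a v) (e b v)))"
      unfolding pSUP[OF opn2] D_def using pconst[OF opn] by simp
    finally show ?thesis .
  qed
  have "Ldirected e D" unfolding Ldirected_def using Dnon Ddir by blast
  then obtain x where x: "is_Lsup e D x" using dcpo unfolding L_dcpo_def by blast
  have "p A = A x" if A: "A \<in> T" for A
  proof -
    have opn3: "inf (\<lambda>y. W y z) (\<lambda>_. A z) \<in> T" for z by (rule T_inf[OF Up_open T_const])
    have "A = (SUP z. inf (\<lambda>y. W y z) (\<lambda>_. A z))"
    proof (rule ext)
      fix y
      have "A y = (SUP z. inf (W y z) (A z))" using open_rep[OF A, of y] by (simp add: inf_commute)
      thus "A y = (SUP z. inf (\<lambda>y. W y z) (\<lambda>_. A z)) y" by (simp add: Sup_apply image_comp comp_def)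
    qed
    hence "p A = p (SUP z. inf (\<lambda>y. W y z) (\<lambda>_. A z))" by (rule arg_cong)
    also have "\<dots> = (SUP z. p (inf (\<lambda>y. W y z) (\<lambda>_. A z)))"
      by (rule pSUP[of "\<lambda>z. inf (\<lambda>y. W y z) (\<lambda>_. A z)", OF opn3])
    also have "\<dots> = (SUP z. inf (D z) (A z))" unfolding D_def using pconst[OF Up_open] by simp
    also have "\<dots> = A x" using open_scott[OF A \<open>Ldirected e D\<close> x] by (simp add: inf_commute)
    finally show ?thesis .
  qed
  thus ?thesis by blast
qed

lemma sober: "L_dcpo e \<Longrightarrow> L_sober T"
  unfolding L_sober_def using point_x T0 point_ex by blast

end

theorem proposition4p2:
  fixes e :: "'a \<Rightarrow> 'a \<Rightarrow> 'l::frame"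
  assumes "is_Lorder e" and "L_continuous e"
  shows "is_Ltopology (sigmaL e) \<and> locally_super_compact (sigmaL e) \<and>
         (L_dcpo e \<longrightarrow> L_sober (sigmaL e))"
proof -
  interpret Lcont e using assms by unfold_locales
  show ?thesis using topology lsc sober by blast
qed

end
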